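(* Let $G=(V,E)$ be a finite connected directed graph with $(i,j)\in E$ if and only if $(j,i)\in E$, and write $\partial i=\{j\in V:(j,i)\in E\}$. Let $f=(f_{ij})_{(i,j)\in E}$ with each $f_{ij}:\mathbb{R}\to\mathbb{R}$ continuous and strictly increasing and $f_{ij}(x)=-f_{ji}(-x)$. Let $(\phi,\pi)$ and $(\phi^*,\pi^* )$, with $\phi,\phi^*:E\to\mathbb{R}$ skew-symmetric and $\pi,\pi^*:V\to\mathbb{R}$, satisfy $\sum_{j\in\partial i}\phi_{ji}+q_i=0$, $\sum_{j\in\partial i}\phi^*_{ji}+q^*_i=0$ for all $i\in V$, and $\pi_j-\pi_i=-f_{ij}(\phi_{ij})$, $\pi^*_j-\pi^*_i=-f_{ij}(\phi^*_{ij})$ for all $(i,j)\in E$, for productions $q,q^*:V\to\mathbb{R}$. Let $T\subset V$ be non-empty. If $\pi_t\ge\pi_t^*$ for all $t\in T$ and $q_i\ge q_i^*$ for all $i\in V\setminus T$, then $\pi_u\ge\pi_u^*$ for every $u\in V\setminus T$. Moreover, if $q_u>q_u^*$, then $\pi_u>\pi_u^*$. *)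

theory Defs
  imports Complex_Main
begin

definition sym_graph :: "'a set \<Rightarrow> ('a \<times> 'a) set \<Rightarrow> bool" where
  "sym_graph V E \<longleftrightarrow> finite V \<and> E \<subseteq> V \<times> V \<and> (\<forall>i j. (i, j) \<in> E \<longleftrightarrow> (j, i) \<in> E)"

definition graph_connected :: "'a set \<Rightarrow> ('a \<times> 'a) set \<Rightarrow> bool" where
  "graph_connected V E \<longleftrightarrow> (\<forall>u\<in>V. \<forall>v\<in>V. (u, v) \<in> E\<^sup>*)"

definition in_nbhd :: "'a set \<Rightarrow> ('a \<times> 'a) set \<Rightarrow> 'a \<Rightarrow> 'a set" where
  "in_nbhd V E i = {j \<in> V. (j, i) \<in> E}"

definition is_solution ::
  "'a set \<Rightarrow> ('a \<times> 'a) set \<Rightarrow> ('a \<Rightarrow> 'a \<Rightarrow> real \<Rightarrow> real) \<Rightarrow> ('a \<Rightarrow> real)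
    \<Rightarrow> ('a \<Rightarrow> 'a \<Rightarrow> real) \<Rightarrow> ('a \<Rightarrow> real) \<Rightarrow> bool" where
  "is_solution V E f q phi p \<longleftrightarrow>
     (\<forall>(i, j)\<in>E. phi i j = - phi j i) \<and>
     (\<forall>i\<in>V. (\<Sum>j\<in>in_nbhd V E i. phi j i) + q i = 0) \<and>
     (\<forall>(i, j)\<in>E. p j - p i = - f i j (phi i j))"

end

theory Submission
  imports Defs
begin

lemma key:
  assumes graph: "sym_graph V E"
    and f_mono: "\<And>i j. (i, j) \<in> E \<Longrightarrow> strict_mono (f i j)"
    and sol: "is_solution V E f q phi p"
    and sols: "is_solution V E f qs phis ps"
    and iV: "i \<in> V"
    and ge: "\<forall>j\<in>in_nbhd V E i. p j - ps j \<ge> p i - ps i"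
  shows "q i \<le> qs i \<and> (q i \<ge> qs i \<longrightarrow> (\<forall>j\<in>in_nbhd V E i. p j - ps j = p i - ps i))"
proof -
  let ?N = "in_nbhd V E i"
  have fin: "finite ?N" using graph unfolding sym_graph_def in_nbhd_def by auto
  have edge: "\<And>j. j \<in> ?N \<Longrightarrow> (i, j) \<in> E" using graph unfolding sym_graph_def in_nbhd_def by auto
  have edge2: "\<And>j. j \<in> ?N \<Longrightarrow> (j, i) \<in> E" unfolding in_nbhd_def by auto
  have qi: "q i = (\<Sum>j\<in>?N. phi i j)"
  proof -
    have "(\<Sum>j\<in>?N. phi j i) + q i = 0" using sol iV unfolding is_solution_def by blast
    moreover have "(\<Sum>j\<in>?N. phi j i) = (\<Sum>j\<in>?N. - phi i j)"
      by (rule sum.cong) (use sol edge2 in \<open>auto simp: is_solution_def\<close>)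
    ultimately show ?thesis by (simp add: sum_negf)
  qed
  have qsi: "qs i = (\<Sum>j\<in>?N. phis i j)"
  proof -
    have "(\<Sum>j\<in>?N. phis j i) + qs i = 0" using sols iV unfolding is_solution_def by blast
    moreover have "(\<Sum>j\<in>?N. phis j i) = (\<Sum>j\<in>?N. - phis i j)"
      by (rule sum.cong) (use sols edge2 in \<open>auto simp: is_solution_def\<close>)
    ultimately show ?thesis by (simp add: sum_negf)
  qed
  have diff: "\<And>j. j \<in> ?N \<Longrightarrow> f i j (phis i j) - f i j (phi i j) = (p j - ps j) - (p i - ps i)"
  proof -
    fix j assume j: "j \<in> ?N"
    have "p j - p i = - f i j (phi i j)" using sol edge[OF j] unfolding is_solution_def by blast
    moreover have "ps j - ps i = - f i j (phis i j)" using sols edge[OF j] unfolding is_solution_def by blast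
    ultimately show "f i j (phis i j) - f i j (phi i j) = (p j - ps j) - (p i - ps i)" by linarith
  qed
  have le: "\<And>j. j \<in> ?N \<Longrightarrow> phi i j \<le> phis i j"
  proof (rule ccontr)
    fix j assume j: "j \<in> ?N" and "\<not> phi i j \<le> phis i j"
    then have "phis i j < phi i j" by simp
    then have "f i j (phis i j) < f i j (phi i j)" using f_mono[OF edge[OF j]] by (simp add: strict_monoD)
    with diff[OF j] ge j show False by fastforce
  qed
  have A: "q i \<le> qs i" unfolding qi qsi by (rule sum_mono) (use le in auto)
  have B: "\<forall>j\<in>?N. p j - ps j = p i - ps i" if "q i \<ge> qs i"
  proof
    fix j assume j: "j \<in> ?N"
    have "(\<Sum>j\<in>?N. phis i j - phi i j) = 0" using that A unfolding qi qsi
      by (simp add: sum_subtractf)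
    then have "\<forall>j\<in>?N. phis i j - phi i j = 0"
      using sum_nonneg_eq_0_iff[OF fin, of "\<lambda>j. phis i j - phi i j"] le by auto
    with j have "phis i j = phi i j" by auto
    with diff[OF j] show "p j - ps j = p i - ps i" by simp
  qed
  show ?thesis using A B by blast
qed

theorem corollary1:
  fixes V :: "'a set" and E :: "('a \<times> 'a) set"
    and f :: "'a \<Rightarrow> 'a \<Rightarrow> real \<Rightarrow> real"
    and phi phis :: "'a \<Rightarrow> 'a \<Rightarrow> real"
    and p ps q qs :: "'a \<Rightarrow> real"
    and T :: "'a set"
  assumes graph: "sym_graph V E" and conn: "graph_connected V E"
    and f_cont: "\<And>i j. (i, j) \<in> E \<Longrightarrow> continuous_on UNIV (f i j)"
    and f_mono: "\<And>i j. (i, j) \<in> E \<Longrightarrow> strict_mono (f i j)"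
    and f_odd: "\<And>i j x. (i, j) \<in> E \<Longrightarrow> f i j x = - f j i (- x)"
    and sol: "is_solution V E f q phi p"
    and sols: "is_solution V E f qs phis ps"
    and T: "T \<subseteq> V" "T \<noteq> {}"
    and hT: "\<And>t. t \<in> T \<Longrightarrow> p t \<ge> ps t"
    and hq: "\<And>i. i \<in> V - T \<Longrightarrow> q i \<ge> qs i"
  shows "(\<forall>u\<in>V - T. p u \<ge> ps u) \<and> (\<forall>u\<in>V - T. q u > qs u \<longrightarrow> p u > ps u)"
proof -
  define d where "d v = p v - ps v" for v
  have finV: "finite V" using graph unfolding sym_graph_def by auto
  have P1: "\<forall>u\<in>V - T. p u \<ge> ps u"
  proof (rule ccontr)
    assume "\<not> (\<forall>u\<in>V - T. p u \<ge> ps u)"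
    then obtain u0 where u0: "u0 \<in> V - T" "d u0 < 0" unfolding d_def by force
    define m where "m = Min (d ` V)"
    have mle: "\<And>v. v \<in> V \<Longrightarrow> m \<le> d v" unfolding m_def using finV by auto
    have "m \<in> d ` V" unfolding m_def using finV u0 by (intro Min_in) auto
    then obtain s where s: "s \<in> V" "d s = m" by auto
    have mneg: "m < 0" using mle[of u0] u0 by auto
    define S where "S = {v\<in>V. d v = m}"
    have ST: "\<And>v. v \<in> S \<Longrightarrow> v \<notin> T" using hT mneg unfolding S_def d_def by force
    have clos: "\<And>y z. y \<in> S \<Longrightarrow> (y, z) \<in> E \<Longrightarrow> z \<in> S"
    proof -
      fix y z assume y: "y \<in> S" and yz: "(y, z) \<in> E"
      have zN: "z \<in> in_nbhd V E y" using graph yz unfolding sym_graph_def in_nbhd_def by auto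
      have yV: "y \<in> V" using y S_def by auto
      have ge: "\<forall>j\<in>in_nbhd V E y. p j - ps j \<ge> p y - ps y"
        using mle y unfolding S_def d_def in_nbhd_def by auto
      have "q y \<ge> qs y" using hq yV ST[OF y] by auto
      with key[OF graph f_mono sol sols yV ge] zN have "d z = d y" unfolding d_def by auto
      moreover have "z \<in> V" using zN unfolding in_nbhd_def by auto
      ultimately show "z \<in> S" using y unfolding S_def by auto
    qed
    obtain t where t: "t \<in> T" using T by auto
    have "(s, t) \<in> E\<^sup>*" using conn s t T unfolding graph_connected_def by auto
    then have "t \<in> S"
    proof (induction rule: rtrancl_induct)
      case base then show ?case using s unfolding S_def by auto
    next
      case (step y z) then show ?case using clos by auto
    qed
    then show False using ST t by auto
  qed
  have P2: "\<forall>u\<in>V - T. q u > qs u \<longrightarrow> p u > ps u"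
  proof (intro ballI impI)
    fix u assume u: "u \<in> V - T" and qu: "q u > qs u"
    show "p u > ps u"
    proof (rule ccontr)
      assume "\<not> p u > ps u"
      with P1 u have du: "p u - ps u = 0" by force
      have ge: "\<forall>j\<in>in_nbhd V E u. p j - ps j \<ge> p u - ps u"
      proof
        fix j assume "j \<in> in_nbhd V E u"
        then have "j \<in> V" unfolding in_nbhd_def by auto
        then have "p j \<ge> ps j" using P1 hT by (cases "j \<in> T") auto
        then show "p j - ps j \<ge> p u - ps u" using du by simp
      qed
      have "q u \<le> qs u" using key[OF graph f_mono sol sols _ ge] u by auto
      with qu show False by simp
    qed
  qed
  show ?thesis using P1 P2 by blast
qed

end
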